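(* Let $A=\mathbb{S}\mathbb{O}$, $f\in\mathcal{S}(\Omega)$ and $x\in\Omega$. Then one of the following possibilities applies: (1) $V(f)\cap\mathbb{S}_x=\emptyset$; (2) $V(f)\cap\mathbb{S}_x=\{y\}$, $f'_s(x)\in C_A^*=\mathbb{S}\mathbb{O}\setminus n^{-1}(0)$ and $y=\mathrm{re}(x)-f^\circ_s(x)f'_s(x)^{-1}$; (3) $V(f)\cap\mathbb{S}_x$ is an affine $2$-plane in $\mathbb{S}\mathbb{O}\simeq\mathbb{R}^8$ and $f'_s(x)$ is a zero divisor (i.e., it is a nonzero element of $n^{-1}(0)$); (4) $V(f)\supseteq\mathbb{S}_x$ and $f'_s(x)=0$. In each of these cases, respectively: (1) either $V(N(f))\cap\mathbb{S}_x=\emptyset=V(f^c)\cap\mathbb{S}_x$; or $V(N(f))\supseteq\mathbb{S}_x$ and $V(f^c)\cap\mathbb{S}_x$ is either empty or $2$-dimensional; (2) $V(N(f))\supseteq\mathbb{S}_x$ and $V(f^c)\cap\mathbb{S}_x=\{f'_s(x)^{-1}y^cf'_s(x)\}$; (3) $V(N(f))\supseteq\mathbb{S}_x$ and $V(f^c)\cap\mathbb{S}_x$ is either empty or $2$-dimensional; (4) $\mathbb{S}_x$ is included both in $V(f^c)$ and in $V(N(f))$.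
   Context: $\mathbb{S}\mathbb{O}$ (split-octonions) is the real algebra $\mathbb{H}+l\mathbb{H}$ ($\mathbb{H}$ the quaternions) with product determined by $(lp)(lq)=qp^c$, $p(lq)=l(p^cq)$, $(lp)q=l(qp)$ for $p,q\in\mathbb{H}$ ($p^c$ the quaternionic conjugate), and $^*$-involution $(p+lq)^c=p^c-lq$; it is an alternative $^*$-algebra with norm $n(x)=xx^c$, $n(p+lq)=n(p)-n(q)$. For a real finite-dimensional unital alternative $^*$-algebra $A$: $t(x)=x+x^c$; center $=\{r:(r,a,b)=0,\ ra=ar\ \forall a,b\}$; $C_A=\{0\}\cup\{a:n(a),n(a^c)$ invertible elements of the center$\}$, $C_A^*=C_A\setminus\{0\}$. $\mathbb{S}_A=\{J:t(J)=0,n(J)=1\}$, $Q_A=\mathbb{R}\cup\{x:t(x),n(x)\in\mathbb{R},4n(x)>t(x)^2\}$; every $x\in Q_A$ is $\alpha+\beta J$ ($\alpha,\beta\in\mathbb{R}$, $J\in\mathbb{S}_A$), $x^c=\alpha-\beta J$, $\mathrm{re}(x)=t(x)/2$, $\mathrm{im}(x)=x-\mathrm{re}(x)$, $\mathbb{S}_x=\{\alpha+\beta I:I\in\mathbb{S}_A\}$. Let $D\subseteq\mathbb{C}$ be non-empty, invariant under conjugation, $\Omega=\{\alpha+\beta J:\alpha+i\beta\in D,J\in\mathbb{S}_A\}$. $A_{\mathbb{C}}=\{a+\imath b\}$ with $(a+\imath b)(a'+\imath b')=aa'-bb'+\imath(ab'+ba')$, $\overline{a+\imath b}=a-\imath b$,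 $(a+\imath b)^c=a^c+\imath b^c$. A stem function $F=F_1+\imath F_2:D\to A_{\mathbb{C}}$ satisfies $F(\bar z)=\overline{F(z)}$ and induces the slice function $f=\mathcal{I}(F)$, $f(\alpha+\beta J)=F_1(\alpha+i\beta)+JF_2(\alpha+i\beta)$; $\mathcal{S}(\Omega)$ is the set of these. $f\cdot g=\mathcal{I}(FG)$, $f^c=\mathcal{I}(F^c)$ with $F^c(z)=F(z)^c$, $N(f)=f\cdot f^c$. $V(h)=\{x:h(x)=0\}$. $f^\circ_s(x)=\frac12(f(x)+f(x^c))$, $f'_s(x)=\frac12\mathrm{im}(x)^{-1}(f(x)-f(x^c))$ for $x\notin\mathbb{R}$ (and $f'_s(x):=0$ is not defined for real $x$; for real $x$ only cases (1),(4)-type statements about $\{x\}=\mathbb{S}_x$ are meaningful). *)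

theory Defs
  imports "HOL-Analysis.Analysis"
begin

section \<open>Quaternions, as 4-tuples of reals (a + b i + c j + d k)\<close>

type_synonym quat = "real \<times> real \<times> real \<times> real"

definition qmul :: "quat \<Rightarrow> quat \<Rightarrow> quat" where
  "qmul p q = (case p of (a1, b1, c1, d1) \<Rightarrow> case q of (a2, b2, c2, d2) \<Rightarrow>
     (a1*a2 - b1*b2 - c1*c2 - d1*d2,
      a1*b2 + b1*a2 + c1*d2 - d1*c2,
      a1*c2 - b1*d2 + c1*a2 + d1*b2,
      a1*d2 + b1*c2 - c1*b2 + d1*a2))"

definition qcnj :: "quat \<Rightarrow> quat" where
  "qcnj p = (case p of (a, b, c, d) \<Rightarrow> (a, -b, -c, -d))"

section \<open>Split-octonions SO = H + l H, the pair (p,q) standing for p + l q\<close>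

text \<open>The real vector space structure (and the Euclidean structure identifying SO with R^8)
  is the one of the product type.\<close>

type_synonym so = "quat \<times> quat"

text \<open>Product determined by (lp)(lq) = q p^c, p(lq) = l(p^c q), (lp)q = l(qp):
  (p + l q)(p' + l q') = (p p' + q' q^c) + l (p^c q' + p' q).\<close>

definition so_mult :: "so \<Rightarrow> so \<Rightarrow> so" (infixl "\<odot>" 70) where
  "x \<odot> y = (case x of (p, q) \<Rightarrow> case y of (p', q') \<Rightarrow>
     (qmul p p' + qmul q' (qcnj q), qmul (qcnj p) q' + qmul p' q))"

definition so_one :: so where
  "so_one = ((1, 0, 0, 0), 0)"

definition so_of_real :: "real \<Rightarrow> so" where
  "so_of_real r = r *\<^sub>R so_one"

definition so_cnj :: "so \<Rightarrow> so" where
  "so_cnj x = (case x of (p, q) \<Rightarrow> (qcnj p, - q))"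

definition so_t :: "so \<Rightarrow> so" where
  "so_t x = x + so_cnj x"

definition so_n :: "so \<Rightarrow> so" where
  "so_n x = x \<odot> so_cnj x"

definition so_inverse :: "so \<Rightarrow> so" where
  "so_inverse a = (THE b. a \<odot> b = so_one \<and> b \<odot> a = so_one)"

definition so_re :: "so \<Rightarrow> so" where
  "so_re x = (1/2) *\<^sub>R so_t x"

definition so_im :: "so \<Rightarrow> so" where
  "so_im x = x - so_re x"

definition so_assoc :: "so \<Rightarrow> so \<Rightarrow> so \<Rightarrow> so" where
  "so_assoc a b c = (a \<odot> b) \<odot> c - a \<odot> (b \<odot> c)"

definition so_center :: "so set" where
  "so_center = {r. \<forall>a b. so_assoc r a b = 0 \<and> r \<odot> a = a \<odot> r}"

definition so_central_invertible :: "so \<Rightarrow> bool" where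
  "so_central_invertible r \<longleftrightarrow> r \<in> so_center \<and> (\<exists>s. r \<odot> s = so_one \<and> s \<odot> r = so_one)"

definition so_C :: "so set" where
  "so_C = {0} \<union> {a. so_central_invertible (so_n a) \<and> so_central_invertible (so_n (so_cnj a))}"

definition so_C_star :: "so set" where
  "so_C_star = so_C - {0}"

definition so_zero_divisor :: "so \<Rightarrow> bool" where
  "so_zero_divisor a \<longleftrightarrow> a \<noteq> 0 \<and> so_n a = 0"

definition so_S :: "so set" where
  "so_S = {J. so_t J = 0 \<and> so_n J = so_one}"

definition so_sphere :: "so \<Rightarrow> so set" where
  "so_sphere x = {y. \<exists>\<alpha> \<beta> J I. J \<in> so_S \<and> I \<in> so_S \<and>
      x = so_of_real \<alpha> + \<beta> *\<^sub>R J \<and> y = so_of_real \<alpha> + \<beta> *\<^sub>R I}"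

definition Omega :: "complex set \<Rightarrow> so set" where
  "Omega D = {so_of_real \<alpha> + \<beta> *\<^sub>R J | \<alpha> \<beta> J. Complex \<alpha> \<beta> \<in> D \<and> J \<in> so_S}"

section \<open>The complexification A_C, elements a + i b as pairs (a, b)\<close>

type_synonym soC = "so \<times> so"

definition soC_mult :: "soC \<Rightarrow> soC \<Rightarrow> soC" where
  "soC_mult u v = (case u of (a, b) \<Rightarrow> case v of (a', b') \<Rightarrow>
     (a \<odot> a' - b \<odot> b', a \<odot> b' + b \<odot> a'))"

definition soC_bar :: "soC \<Rightarrow> soC" where
  "soC_bar u = (case u of (a, b) \<Rightarrow> (a, - b))"

definition soC_cnj :: "soC \<Rightarrow> soC" where
  "soC_cnj u = (case u of (a, b) \<Rightarrow> (so_cnj a, so_cnj b))"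

definition is_stem :: "complex set \<Rightarrow> (complex \<Rightarrow> soC) \<Rightarrow> bool" where
  "is_stem D F \<longleftrightarrow> (\<forall>z\<in>D. F (cnj z) = soC_bar (F z))"

definition slice :: "complex set \<Rightarrow> (complex \<Rightarrow> soC) \<Rightarrow> so \<Rightarrow> so" where
  "slice D F x = (THE y. \<exists>\<alpha> \<beta> J. Complex \<alpha> \<beta> \<in> D \<and> J \<in> so_S \<and>
      x = so_of_real \<alpha> + \<beta> *\<^sub>R J \<and>
      y = fst (F (Complex \<alpha> \<beta>)) + J \<odot> snd (F (Complex \<alpha> \<beta>)))"

text \<open>f^c = I(F^c) and N(f) = f . f^c = I(F F^c).\<close>
definition slice_cnj :: "complex set \<Rightarrow> (complex \<Rightarrow> soC) \<Rightarrow> so \<Rightarrow> so" where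
  "slice_cnj D F = slice D (\<lambda>z. soC_cnj (F z))"

definition slice_N :: "complex set \<Rightarrow> (complex \<Rightarrow> soC) \<Rightarrow> so \<Rightarrow> so" where
  "slice_N D F = slice D (\<lambda>z. soC_mult (F z) (soC_cnj (F z)))"

definition zeros :: "(so \<Rightarrow> so) \<Rightarrow> so set" where
  "zeros h = {y. h y = 0}"

definition sph_value :: "(so \<Rightarrow> so) \<Rightarrow> so \<Rightarrow> so" where
  "sph_value f x = (1/2) *\<^sub>R (f x + f (so_cnj x))"

definition sph_deriv :: "(so \<Rightarrow> so) \<Rightarrow> so \<Rightarrow> so" where
  "sph_deriv f x = (if so_im x = 0 then 0
     else (1/2) *\<^sub>R (so_inverse (so_im x) \<odot> (f x - f (so_cnj x))))"

definition affine_2plane :: "so set \<Rightarrow> bool" where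
  "affine_2plane S \<longleftrightarrow> affine S \<and> aff_dim S = 2"

end

theory Submission
  imports Defs
begin

definition NQ :: "so \<Rightarrow> real" where
 "NQ x = (case x of ((a,b,c,d),(e,f,g,h)) \<Rightarrow> a*a+b*b+c*c+d*d-e*e-f*f-g*g-h*h)"
definition BQ :: "so \<Rightarrow> so \<Rightarrow> real" where
 "BQ x y = (case x of ((a,b,c,d),(e,f,g,h)) \<Rightarrow> case y of ((a',b',c',d'),(e',f',g',h')) \<Rightarrow>
     a*a'+b*b'+c*c'+d*d'-e*e'-f*f'-g*g'-h*h')"
definition R1 :: "so \<Rightarrow> real" where "R1 x = fst (fst x)"
definition flip :: "so \<Rightarrow> so" where "flip x = (case x of (p,q) \<Rightarrow> (p, -q))"

lemmas so_defs = so_mult_def qmul_def qcnj_def so_cnj_def NQ_def BQ_def R1_def so_of_real_def so_one_def flip_def zero_prod_def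

lemma so_of_real_coord: "so_of_real r = ((r,0,0,0),(0,0,0,0))"
  by (simp add: so_defs)

lemma so_of_real_inj[simp]: "so_of_real a = so_of_real b \<longleftrightarrow> a = b"
  by (simp add: so_of_real_coord)
lemma so_of_real_0[simp]: "so_of_real 0 = 0" by (simp add: so_of_real_coord zero_prod_def)
lemma so_one_eq: "so_one = so_of_real 1" by (simp add: so_defs)
lemma so_of_real_add: "so_of_real (a+b) = so_of_real a + so_of_real b"
  by (simp add: so_of_real_def scaleR_add_left)
lemma so_of_real_scale: "so_of_real (a*b) = a *\<^sub>R so_of_real b"
  by (simp add: so_of_real_def)
lemma so_of_real_minus: "so_of_real (-a) = - so_of_real a"
  by (simp add: so_of_real_def)
lemma so_of_real_diff: "so_of_real (a-b) = so_of_real a - so_of_real b"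
  by (simp add: so_of_real_def scaleR_diff_left)

lemma mult_of_real_left[simp]: "so_of_real r \<odot> x = r *\<^sub>R x"
  by (cases x, auto simp: so_defs split: prod.splits)
lemma mult_of_real_right[simp]: "x \<odot> so_of_real r = r *\<^sub>R x"
  by (cases x, auto simp: so_defs split: prod.splits)

lemma mult_add_left: "(x + y) \<odot> z = x \<odot> z + y \<odot> z"
  by (cases x, cases y, cases z, auto simp: so_defs split: prod.splits; (simp add: algebra_simps)?)
lemma mult_add_right: "z \<odot> (x + y) = z \<odot> x + z \<odot> y"
  by (cases x, cases y, cases z, auto simp: so_defs split: prod.splits; (simp add: algebra_simps)?)
lemma mult_scale_left[simp]: "(r *\<^sub>R x) \<odot> z = r *\<^sub>R (x \<odot> z)"
  by (cases x, cases z, auto simp: so_defs split: prod.splits; (simp add: algebra_simps)?)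
lemma mult_scale_right[simp]: "z \<odot> (r *\<^sub>R x) = r *\<^sub>R (z \<odot> x)"
  by (cases x, cases z, auto simp: so_defs split: prod.splits; (simp add: algebra_simps)?)
lemma mult_zero_left[simp]: "0 \<odot> x = 0"
  using mult_scale_left[where r=0 and x=0 and z=x] by simp
lemma mult_zero_right[simp]: "x \<odot> 0 = 0"
  using mult_scale_right[where r=0 and x=0 and z=x] by simp
lemma mult_minus_left[simp]: "(- x) \<odot> z = - (x \<odot> z)"
  using mult_scale_left[where r="-1" and x=x and z=z] by simp
lemma mult_minus_right[simp]: "z \<odot> (- x) = - (z \<odot> x)"
  using mult_scale_right[where r="-1" and x=x and z=z] by simp
lemma mult_diff_left: "(x - y) \<odot> z = x \<odot> z - y \<odot> z"
  using mult_add_left[of x "-y" z] by simp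
lemma mult_diff_right: "z \<odot> (x - y) = z \<odot> x - z \<odot> y"
  using mult_add_right[of z x "-y"] by simp

lemma cnj_add[simp]: "so_cnj (x + y) = so_cnj x + so_cnj y"
  by (cases x, cases y, auto simp: so_defs split: prod.splits)
lemma cnj_scale[simp]: "so_cnj (r *\<^sub>R x) = r *\<^sub>R so_cnj x"
  by (cases x, auto simp: so_defs split: prod.splits)
lemma cnj_minus[simp]: "so_cnj (- x) = - so_cnj x"
  by (cases x, auto simp: so_defs split: prod.splits)
lemma cnj_diff[simp]: "so_cnj (x - y) = so_cnj x - so_cnj y"
  by (cases x, cases y, auto simp: so_defs split: prod.splits)
lemma cnj_zero[simp]: "so_cnj 0 = 0"
  by (simp add: so_defs zero_prod_def)
lemma cnj_cnj[simp]: "so_cnj (so_cnj x) = x"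
  by (cases x, auto simp: so_defs split: prod.splits)
lemma cnj_of_real[simp]: "so_cnj (so_of_real r) = so_of_real r"
  by (simp add: so_defs)
lemma cnj_mult: "so_cnj (x \<odot> y) = so_cnj y \<odot> so_cnj x"
  by (cases x, cases y, auto simp: so_defs split: prod.splits; (simp add: algebra_simps)?)
lemma cnj_eq: "so_cnj x = so_of_real (2 * R1 x) - x"
  by (cases x, auto simp: so_defs split: prod.splits)

lemma so_n_eq: "so_n x = so_of_real (NQ x)"
  by (cases x, auto simp: so_n_def so_defs split: prod.splits; (simp add: algebra_simps)?)
lemma so_t_eq: "so_t x = so_of_real (2 * R1 x)"
  by (cases x, auto simp: so_t_def so_defs split: prod.splits)
lemma mult_cnj_self: "x \<odot> so_cnj x = so_of_real (NQ x)"
  using so_n_eq unfolding so_n_def .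
lemma NQ_cnj[simp]: "NQ (so_cnj x) = NQ x"
  by (cases x, auto simp: so_defs split: prod.splits)
lemma cnj_mult_self: "so_cnj x \<odot> x = so_of_real (NQ x)"
  using mult_cnj_self[of "so_cnj x"] by simp
lemma NQ_mult: "NQ (x \<odot> y) = NQ x * NQ y"
  by (cases x, cases y, auto simp: so_defs split: prod.splits; (simp add: algebra_simps)?)
lemma NQ_scale[simp]: "NQ (r *\<^sub>R x) = r * r * NQ x"
  by (cases x, auto simp: so_defs split: prod.splits; (simp add: algebra_simps)?)
lemma NQ_minus[simp]: "NQ (- x) = NQ x"
  by (cases x, auto simp: so_defs split: prod.splits)
lemma NQ_add: "NQ (x + y) = NQ x + NQ y + 2 * BQ x y"
  by (cases x, cases y, auto simp: so_defs split: prod.splits; (simp add: algebra_simps)?)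
lemma NQ_of_real[simp]: "NQ (so_of_real r) = r * r"
  by (simp add: so_defs)
lemma NQ_zero[simp]: "NQ 0 = 0"
  by (simp add: so_defs zero_prod_def)

lemma left_inv: "so_cnj x \<odot> (x \<odot> y) = NQ x *\<^sub>R y"
  by (cases x, cases y, auto simp: so_defs split: prod.splits; (simp add: algebra_simps)?)
lemma right_inv: "(y \<odot> x) \<odot> so_cnj x = NQ x *\<^sub>R y"
  by (cases x, cases y, auto simp: so_defs split: prod.splits; (simp add: algebra_simps)?)
lemma left_inv2: "x \<odot> (so_cnj x \<odot> y) = NQ x *\<^sub>R y"
  using left_inv[of "so_cnj x" y] by simp
lemma right_inv2: "(y \<odot> so_cnj x) \<odot> x = NQ x *\<^sub>R y"
  using right_inv[of y "so_cnj x"] by simp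

lemma R1_comm: "R1 (x \<odot> y) = R1 (y \<odot> x)"
  by (cases x, cases y, auto simp: so_defs split: prod.splits; (simp add: algebra_simps)?)
lemma R1_mult_cnj: "R1 (x \<odot> so_cnj y) = BQ x y"
  by (cases x, cases y, auto simp: so_defs split: prod.splits; (simp add: algebra_simps)?)
lemma BQ_adj: "BQ w (y \<odot> so_cnj b) = BQ (w \<odot> b) y"
  by (cases w, cases y, cases b, auto simp: so_defs split: prod.splits; (simp add: algebra_simps)?)
lemma BQ_sym: "BQ x y = BQ y x"
  by (cases x, cases y, auto simp: so_defs split: prod.splits; (simp add: algebra_simps)?)
lemma sum_cnj: "x \<odot> so_cnj y + y \<odot> so_cnj x = so_of_real (2 * BQ x y)"
  by (cases x, cases y, auto simp: so_defs split: prod.splits; (simp add: algebra_simps)?)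
lemma BQ_add2: "BQ x (y + z) = BQ x y + BQ x z"
  by (cases x, cases y, cases z, auto simp: so_defs split: prod.splits; (simp add: algebra_simps)?)
lemma BQ_scale2: "BQ x (r *\<^sub>R y) = r * BQ x y"
  by (cases x, cases y, auto simp: so_defs split: prod.splits; (simp add: algebra_simps)?)
lemma BQ_add1: "BQ (y + z) x = BQ y x + BQ z x"
  by (cases x, cases y, cases z, auto simp: so_defs split: prod.splits; (simp add: algebra_simps)?)
lemma BQ_scale1: "BQ (r *\<^sub>R y) x = r * BQ y x"
  by (cases x, cases y, auto simp: so_defs split: prod.splits; (simp add: algebra_simps)?)
lemma BQ_one: "BQ (so_of_real r) x = r * R1 x"
  by (cases x, auto simp: so_defs split: prod.splits)
lemma BQ_flip: "BQ x (flip x) = 0 \<Longrightarrow> x = 0"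
  apply (cases x, auto simp: so_defs zero_prod_def split: prod.splits)
  apply (simp_all add: add_nonneg_eq_0_iff)
  done
lemma BQ_nondeg: "x \<noteq> 0 \<Longrightarrow> \<exists>y. BQ x y \<noteq> 0"
  using BQ_flip by blast
lemma R1_add[simp]: "R1 (x + y) = R1 x + R1 y" by (simp add: R1_def)
lemma R1_scale[simp]: "R1 (r *\<^sub>R x) = r * R1 x" by (simp add: R1_def)
lemma R1_minus[simp]: "R1 (- x) = - R1 x" by (simp add: R1_def)
lemma R1_diff[simp]: "R1 (x - y) = R1 x - R1 y" by (simp add: R1_def)
lemma R1_zero[simp]: "R1 0 = 0" by (simp add: R1_def)
lemma R1_of_real[simp]: "R1 (so_of_real r) = r" by (simp add: so_defs)
lemma R1_cnj[simp]: "R1 (so_cnj x) = R1 x" by (cases x, auto simp: so_defs split: prod.splits)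
lemma NQ_fst_zero: "NQ x = 0 \<Longrightarrow> fst x = 0 \<Longrightarrow> x = 0"
  apply (cases x, auto simp: so_defs zero_prod_def split: prod.splits)
  apply (smt (verit) mult_eq_0_iff zero_le_square)+
  done

lemma so_of_real_eq_0[simp]: "so_of_real a = 0 \<longleftrightarrow> a = 0"
  using so_of_real_inj[of a 0] by simp

lemma so_S_iff: "J \<in> so_S \<longleftrightarrow> R1 J = 0 \<and> NQ J = 1"
  by (simp add: so_S_def so_t_eq so_n_eq so_one_eq)

lemma S_neg: "J \<in> so_S \<Longrightarrow> - J \<in> so_S"
  by (simp add: so_S_iff)
lemma S_cnj: "J \<in> so_S \<Longrightarrow> so_cnj J = - J"
  by (simp add: so_S_iff cnj_eq)
lemma S_sq: "J \<in> so_S \<Longrightarrow> J \<odot> (J \<odot> y) = - y"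
  using left_inv[of J y] by (simp add: S_cnj so_S_iff minus_equation_iff)
lemma S_ne0: "J \<in> so_S \<Longrightarrow> J \<noteq> 0"
  by (auto simp: so_S_iff)
definition i0 :: so where "i0 = ((0,1,0,0),0)"
lemma i0_S: "i0 \<in> so_S"
  by (simp add: so_S_iff i0_def so_defs)
lemma S_nonempty: "so_S \<noteq> {}"
  using i0_S by blast

lemma R1_rep: "J \<in> so_S \<Longrightarrow> R1 (so_of_real a + b *\<^sub>R J) = a"
  by (simp add: so_S_iff)

lemma rep_unique:
  assumes "J \<in> so_S" "I \<in> so_S" "so_of_real a + b *\<^sub>R J = so_of_real a' + b' *\<^sub>R I"
  shows "a = a' \<and> b *\<^sub>R J = b' *\<^sub>R I \<and> (b' = b \<or> b' = - b)"
proof -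
  have "a = a'" using arg_cong[OF assms(3), of R1] assms(1,2) by (simp add: so_S_iff)
  moreover then have e: "b *\<^sub>R J = b' *\<^sub>R I" using assms(3) by simp
  moreover have "b * b = b' * b'" using arg_cong[OF e, of NQ] assms by (simp add: so_S_iff)
  then have "b' = b \<or> b' = - b" using square_eq_iff[of b' b] by auto
  ultimately show ?thesis by blast
qed

lemma soC_bar_eq: "soC_bar u = (fst u, - snd u)"
  by (cases u) (simp add: soC_bar_def)
lemma soC_cnj_eq: "soC_cnj u = (so_cnj (fst u), so_cnj (snd u))"
  by (cases u) (simp add: soC_cnj_def)
lemma soC_mult_eq: "soC_mult u v = (fst u \<odot> fst v - snd u \<odot> snd v, fst u \<odot> snd v + snd u \<odot> fst v)"
  by (cases u, cases v) (simp add: soC_mult_def)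

lemma stem_real: "is_stem D G \<Longrightarrow> Complex a 0 \<in> D \<Longrightarrow> snd (G (Complex a 0)) = 0"
proof -
  assume "is_stem D G" "Complex a 0 \<in> D"
  then have "G (Complex a 0) = soC_bar (G (Complex a 0))"
    unfolding is_stem_def using complex_cnj[of a 0] by force
  then have "snd (G (Complex a 0)) = - snd (G (Complex a 0))"
    by (metis soC_bar_eq snd_conv)
  then have "2 *\<^sub>R snd (G (Complex a 0)) = 0" by (metis scaleR_2 eq_neg_iff_add_eq_0)
  then show ?thesis by simp
qed

lemma stem_neg: "is_stem D G \<Longrightarrow> Complex a b \<in> D \<Longrightarrow>
   G (Complex a (-b)) = (fst (G (Complex a b)), - snd (G (Complex a b)))"
proof -
  assume "is_stem D G" "Complex a b \<in> D"
  then have "G (cnj (Complex a b)) = soC_bar (G (Complex a b))"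
    unfolding is_stem_def by blast
  then show ?thesis by (simp add: soC_bar_eq complex_cnj)
qed

lemma slice_eval:
  assumes st: "is_stem D G" and z: "Complex a b \<in> D" and J: "J \<in> so_S"
  shows "slice D G (so_of_real a + b *\<^sub>R J) = fst (G (Complex a b)) + J \<odot> snd (G (Complex a b))"
  unfolding slice_def
proof (rule the_equality)
  show "\<exists>\<alpha> \<beta> Ja. Complex \<alpha> \<beta> \<in> D \<and> Ja \<in> so_S \<and>
       so_of_real a + b *\<^sub>R J = so_of_real \<alpha> + \<beta> *\<^sub>R Ja \<and>
       fst (G (Complex a b)) + J \<odot> snd (G (Complex a b)) = fst (G (Complex \<alpha> \<beta>)) + Ja \<odot> snd (G (Complex \<alpha> \<beta>))"
    using z J by blast
next
  fix y assume "\<exists>\<alpha> \<beta> Ja. Complex \<alpha> \<beta> \<in> D \<and> Ja \<in> so_S \<and>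
       so_of_real a + b *\<^sub>R J = so_of_real \<alpha> + \<beta> *\<^sub>R Ja \<and>
       y = fst (G (Complex \<alpha> \<beta>)) + Ja \<odot> snd (G (Complex \<alpha> \<beta>))"
  then obtain a' b' J' where z': "Complex a' b' \<in> D" and J': "J' \<in> so_S"
    and e: "so_of_real a + b *\<^sub>R J = so_of_real a' + b' *\<^sub>R J'"
    and y: "y = fst (G (Complex a' b')) + J' \<odot> snd (G (Complex a' b'))" by blast
  from rep_unique[OF J J' e] have a: "a' = a" and e2: "b *\<^sub>R J = b' *\<^sub>R J'" and bb: "b' = b \<or> b' = - b"
    by auto
  show "y = fst (G (Complex a b)) + J \<odot> snd (G (Complex a b))"
  proof (cases "b = 0")
    case True
    then have "b' = 0" using bb by auto
    then show ?thesis using y a True stem_real[OF st] z by simp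
  next
    case False
    show ?thesis
    proof (cases "b' = b")
      case True
      then have "J' = J" using e2 False by simp
      then show ?thesis using y a True by simp
    next
      case False2: False
      then have b': "b' = - b" using bb by auto
      then have "b *\<^sub>R J = b *\<^sub>R (- J')" using e2 by simp
      then have "J = - J'" using False by (metis scaleR_cancel_left)
      then have "J' = - J" by simp
      then show ?thesis using y a b' stem_neg[OF st z] by simp
    qed
  qed
qed

lemma stem_cnj: "is_stem D F \<Longrightarrow> is_stem D (\<lambda>z. soC_cnj (F z))"
  unfolding is_stem_def by (simp add: soC_cnj_eq soC_bar_eq)

lemma stem_N: "is_stem D F \<Longrightarrow> is_stem D (\<lambda>z. soC_mult (F z) (soC_cnj (F z)))"
  unfolding is_stem_def by (simp add: soC_cnj_eq soC_bar_eq soC_mult_eq)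

lemma so_inverse_eq:
  assumes "NQ a \<noteq> 0"
  shows "so_inverse a = (1 / NQ a) *\<^sub>R so_cnj a"
  unfolding so_inverse_def
proof (rule the_equality)
  have "a \<odot> ((1 / NQ a) *\<^sub>R so_cnj a) = so_one"
    using assms by (simp add: mult_cnj_self so_one_eq so_of_real_scale[symmetric])
  moreover have "(1 / NQ a) *\<^sub>R so_cnj a \<odot> a = so_one"
    using assms by (simp add: cnj_mult_self so_one_eq so_of_real_scale[symmetric])
  ultimately show "a \<odot> ((1 / NQ a) *\<^sub>R so_cnj a) = so_one \<and> (1 / NQ a) *\<^sub>R so_cnj a \<odot> a = so_one"
    by blast
next
  fix c assume "a \<odot> c = so_one \<and> c \<odot> a = so_one"
  then have "so_cnj a \<odot> (a \<odot> c) = so_cnj a" by (simp add: so_one_eq)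
  then have "NQ a *\<^sub>R c = so_cnj a" by (simp add: left_inv)
  then have "(1 / NQ a) *\<^sub>R (NQ a *\<^sub>R c) = (1 / NQ a) *\<^sub>R so_cnj a" by simp
  then show "c = (1 / NQ a) *\<^sub>R so_cnj a" using assms by simp
qed

lemma BQ_cnj[simp]: "BQ (so_cnj x) (so_cnj y) = BQ x y"
  by (cases x, cases y, auto simp: so_defs split: prod.splits)


lemma subspace_ker: "linear f \<Longrightarrow> subspace {x. f x = 0}"
  unfolding subspace_def by (auto simp: linear_add linear_scale linear_0)

lemma drop_dim:
  fixes U :: "'a::euclidean_space set" and \<phi> :: "'a \<Rightarrow> real"
  assumes U: "subspace U" and lin: "linear \<phi>" and u0: "u0 \<in> U" "\<phi> u0 \<noteq> 0"
  shows "dim (U \<inter> {x. \<phi> x = 0}) + 1 = dim U"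
proof -
  let ?U' = "U \<inter> {x. \<phi> x = 0}"
  have sub': "subspace ?U'"
    using U lin by (simp add: subspace_inter subspace_ker)
  have "span (insert u0 ?U') = U"
  proof
    show "span (insert u0 ?U') \<subseteq> U"
      using U u0 by (simp add: span_minimal)
    show "U \<subseteq> span (insert u0 ?U')"
    proof
      fix u assume u: "u \<in> U"
      define c where "c = \<phi> u / \<phi> u0"
      have "u - c *\<^sub>R u0 \<in> ?U'"
        using u u0 U lin by (simp add: c_def subspace_diff subspace_scale linear_diff linear_scale)
      then have "u - c *\<^sub>R u0 \<in> span (insert u0 ?U')"
        by (meson span_superset subsetD subset_insertI)
      moreover have "c *\<^sub>R u0 \<in> span (insert u0 ?U')"
        by (simp add: span_base span_scale)
      ultimately have "(u - c *\<^sub>R u0) + c *\<^sub>R u0 \<in> span (insert u0 ?U')"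
        by (rule span_add)
      then show "u \<in> span (insert u0 ?U')" by simp
    qed
  qed
  then have "dim U = dim (insert u0 ?U')"
    by (metis dim_span)
  moreover have "u0 \<notin> span ?U'"
    using sub' u0 by (simp add: span_eq_iff[THEN iffD2])
  ultimately show ?thesis
    by (simp add: dim_insert)
qed

lemma iso_dim:
  assumes U: "subspace U" and iso: "\<And>K. K \<in> U \<Longrightarrow> NQ K = 0"
  shows "dim U \<le> 4"
proof -
  have lf: "linear (fst :: so \<Rightarrow> quat)"
    by (rule linearI) auto
  have "inj_on fst (span U)"
  proof (rule inj_onI)
    fix x y assume xy: "x \<in> span U" "y \<in> span U" "fst x = (fst y :: quat)"
    then have "x - y \<in> U" using U by (simp add: span_eq_iff[THEN iffD2] subspace_diff)
    then have "NQ (x - y) = 0" by (rule iso)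
    moreover have "fst (x - y) = 0" using xy by simp
    ultimately have "x - y = 0" by (rule NQ_fst_zero)
    then show "x = y" by simp
  qed
  then have "dim (fst ` U) = dim U"
    by (rule dim_image_eq[OF lf])
  moreover have "dim (fst ` U :: quat set) \<le> 4"
    using dim_subset_UNIV[of "fst ` U :: quat set"] by simp
  ultimately show ?thesis by simp
qed

lemma ann_iso:
  assumes "b \<noteq> 0" "K \<odot> b = 0"
  shows "NQ K = 0"
proof (rule ccontr)
  assume "NQ K \<noteq> 0"
  have "so_cnj K \<odot> (K \<odot> b) = NQ K *\<^sub>R b" by (rule left_inv)
  then show False using assms \<open>NQ K \<noteq> 0\<close> by simp
qed

lemma linear_rmult: "linear (\<lambda>y. y \<odot> b)"
  by (rule linearI) (simp_all add: mult_add_left)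

lemma subspace_ann: "subspace {K. K \<odot> b = 0}"
  using linear_rmult by (rule subspace_ker)

lemma dim_ann:
  assumes b: "b \<noteq> 0" "NQ b = 0"
  shows "dim {K. K \<odot> b = 0} = 4"
proof -
  let ?A = "{K. K \<odot> b = 0}"
  have le: "dim ?A \<le> 4"
    using subspace_ann iso_dim ann_iso[OF b(1)] by blast
  let ?R = "\<lambda>y. y \<odot> so_cnj b"
  define k where "k = {y. y \<odot> so_cnj b = 0}"
  have cb: "so_cnj b \<noteq> 0" using b by (metis cnj_cnj cnj_zero)
  have k4: "dim k \<le> 4"
    unfolding k_def using subspace_ann iso_dim ann_iso[OF cb] by blast
  define C where "C = {y \<in> UNIV. \<forall>x\<in>k. orthogonal x y}"
  have dC: "dim C + dim k = dim (UNIV :: so set)"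
    unfolding C_def by (rule dim_subspace_orthogonal_to_vectors) (simp_all add: subspace_ann k_def)
  have subC: "subspace C"
    unfolding subspace_def C_def orthogonal_def by (auto simp: inner_add_right)
  have "inj_on ?R (span C)"
  proof (rule inj_onI)
    fix x y assume xy: "x \<in> span C" "y \<in> span C" "x \<odot> so_cnj b = y \<odot> so_cnj b"
    then have "x - y \<in> C" using subC by (simp add: span_eq_iff[THEN iffD2] subspace_diff)
    moreover have "x - y \<in> k" using xy by (simp add: mult_diff_left k_def)
    ultimately have "orthogonal (x - y) (x - y)" unfolding C_def by blast
    then show "x = y" by (simp add: orthogonal_def)
  qed
  then have "dim (?R ` C) = dim C"
    by (rule dim_image_eq[OF linear_rmult])
  moreover have "?R ` C \<subseteq> ?A"
    using b by (intro image_subsetI) (simp add: right_inv2)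
  ultimately have "dim C \<le> dim ?A"
    by (metis dim_subset)
  then show ?thesis using le k4 dC by simp
qed

lemma BQ_zero2[simp]: "BQ x 0 = 0"
  using BQ_scale2[of x 0 0] by simp
lemma BQ_minus2[simp]: "BQ x (- y) = - BQ x y"
  using BQ_scale2[of x "-1" y] by simp
lemma BQ_diff2: "BQ x (y - z) = BQ x y - BQ x z"
  using BQ_add2[of x y "-z"] by simp
lemma BQ_minus1[simp]: "BQ (- y) x = - BQ y x"
  using BQ_scale1[of "-1" y x] by simp
lemma BQ_diff1: "BQ (y - z) x = BQ y x - BQ z x"
  using BQ_add1[of y "-z" x] by simp

lemma linear_R1: "linear R1"
  by (rule linearI) simp_all
lemma linear_BQ: "linear (BQ w)"
  by (rule linearI) (simp_all add: BQ_add2 BQ_scale2)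

lemma W_dim:
  assumes b: "b \<noteq> 0" "NQ b = 0" and I0: "I0 \<in> so_S"
  shows "dim {K. K \<odot> b = 0 \<and> R1 K = 0 \<and> BQ I0 K = 0} = 2"
proof -
  define A where "A = {K. K \<odot> b = 0}"
  define A1 where "A1 = A \<inter> {K. R1 K = 0}"
  have WA: "{K. K \<odot> b = 0 \<and> R1 K = 0 \<and> BQ I0 K = 0} = A1 \<inter> {K. BQ I0 K = 0}"
    by (auto simp: A_def A1_def)
  have subA: "subspace A" unfolding A_def by (rule subspace_ann)
  have subA1: "subspace A1" unfolding A1_def
    using subA by (simp add: subspace_inter subspace_ker linear_R1)
  have dA: "dim A = 4" unfolding A_def using dim_ann[OF b] .
  obtain y where y: "BQ b y \<noteq> 0" using BQ_nondeg[OF b(1)] by blast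
  define u0 where "u0 = y \<odot> so_cnj b"
  have u0A: "u0 \<in> A" unfolding u0_def A_def using b by (simp add: right_inv2)
  have Ru0: "R1 u0 \<noteq> 0" unfolding u0_def using y by (simp add: R1_mult_cnj BQ_sym)
  have dA1: "dim A1 + 1 = dim A"
    unfolding A1_def by (rule drop_dim[OF subA linear_R1 u0A Ru0])
  have "\<exists>u1\<in>A1. BQ I0 u1 \<noteq> 0"
  proof (rule ccontr)
    assume "\<not> (\<exists>u1\<in>A1. BQ I0 u1 \<noteq> 0)"
    then have H: "\<And>u. u \<in> A1 \<Longrightarrow> BQ I0 u = 0" by blast
    define lam where "lam = BQ I0 u0 / R1 u0"
    have lamf: "BQ I0 u = lam * R1 u" if u: "u \<in> A" for u
    proof -
      define c where "c = R1 u / R1 u0"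
      have "u - c *\<^sub>R u0 \<in> A1"
        unfolding A1_def using u u0A subA Ru0 by (simp add: c_def subspace_diff subspace_scale)
      then have "BQ I0 (u - c *\<^sub>R u0) = 0" by (rule H)
      then have "BQ I0 u = c * BQ I0 u0" by (simp add: BQ_diff2 BQ_scale2)
      then show ?thesis by (simp add: c_def lam_def)
    qed
    define w where "w = I0 - so_of_real lam"
    have "BQ (w \<odot> b) z = 0" for z
    proof -
      have "z \<odot> so_cnj b \<in> A" unfolding A_def using b by (simp add: right_inv2)
      then have "BQ I0 (z \<odot> so_cnj b) = lam * R1 (z \<odot> so_cnj b)" by (rule lamf)
      then have "BQ w (z \<odot> so_cnj b) = 0" unfolding w_def by (simp add: BQ_diff1 BQ_one)
      then show ?thesis by (simp add: BQ_adj)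
    qed
    then have wb: "w \<odot> b = 0" using BQ_nondeg by blast
    have "NQ w = NQ I0 + NQ (- so_of_real lam) + 2 * BQ I0 (- so_of_real lam)"
      unfolding w_def using NQ_add[of I0 "- so_of_real lam"] by simp
    also have "\<dots> = 1 + lam * lam"
      using I0 by (simp add: so_S_iff BQ_sym[of I0] BQ_one)
    finally have NW: "NQ w = 1 + lam * lam" .
    have "so_cnj w \<odot> (w \<odot> b) = NQ w *\<^sub>R b" by (rule left_inv)
    then have "(1 + lam * lam) *\<^sub>R b = 0" using wb NW by simp
    moreover have "1 + lam * lam \<noteq> 0"
      using zero_le_square[of lam] by linarith
    ultimately show False using b by simp
  qed
  then obtain u1 where u1: "u1 \<in> A1" "BQ I0 u1 \<noteq> 0" by blast
  have "dim (A1 \<inter> {K. BQ I0 K = 0}) + 1 = dim A1"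
    by (rule drop_dim[OF subA1 linear_BQ u1])
  then show ?thesis using WA dA1 dA by simp
qed

lemma ZD:
  assumes b: "b \<noteq> 0" "NQ b = 0" and I0: "I0 \<in> so_S" and c: "c + I0 \<odot> b = 0" and bt: "\<beta> \<noteq> 0"
  shows "affine_2plane ((\<lambda>I. so_of_real \<alpha> + \<beta> *\<^sub>R I) ` {I \<in> so_S. c + I \<odot> b = 0})"
proof -
  define W where "W = {K. K \<odot> b = 0 \<and> R1 K = 0 \<and> BQ I0 K = 0}"
  have subW: "subspace W"
    unfolding W_def subspace_def by (simp add: mult_add_left BQ_add2 BQ_scale2)
  have dW: "dim W = 2" unfolding W_def by (rule W_dim[OF b I0])
  have Z: "{I \<in> so_S. c + I \<odot> b = 0} = (\<lambda>K. I0 + K) ` W"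
  proof
    show "{I \<in> so_S. c + I \<odot> b = 0} \<subseteq> (\<lambda>K. I0 + K) ` W"
    proof
      fix I assume I: "I \<in> {I \<in> so_S. c + I \<odot> b = 0}"
      define K where "K = I - I0"
      have Kb: "K \<odot> b = 0" using I c unfolding K_def by (simp add: mult_diff_left eq_neg_iff_add_eq_0[symmetric])
      have RK: "R1 K = 0" using I I0 unfolding K_def by (simp add: so_S_iff)
      have NK: "NQ K = 0" using ann_iso[OF b(1) Kb] .
      have "NQ I = NQ I0 + NQ K + 2 * BQ I0 K" unfolding K_def using NQ_add[of I0 "I - I0"] by simp
      then have "BQ I0 K = 0" using I I0 NK by (simp add: so_S_iff)
      then have "K \<in> W" unfolding W_def using Kb RK by simp
      moreover have "I = I0 + K" unfolding K_def by simp
      ultimately show "I \<in> (\<lambda>K. I0 + K) ` W" by blast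
    qed
  next
    show "(\<lambda>K. I0 + K) ` W \<subseteq> {I \<in> so_S. c + I \<odot> b = 0}"
    proof
      fix I assume "I \<in> (\<lambda>K. I0 + K) ` W"
      then obtain K where K: "K \<in> W" and IK: "I = I0 + K" by blast
      have NK: "NQ K = 0" using ann_iso[OF b(1)] K unfolding W_def by simp
      have "NQ I = 1" using NQ_add[of I0 K] IK K I0 NK unfolding W_def by (simp add: so_S_iff)
      moreover have "R1 I = 0" using IK K I0 unfolding W_def by (simp add: so_S_iff)
      moreover have "c + I \<odot> b = 0" using IK K c unfolding W_def by (simp add: mult_add_left)
      ultimately show "I \<in> {I \<in> so_S. c + I \<odot> b = 0}" by (simp add: so_S_iff)
    qed
  qed
  define p where "p = so_of_real \<alpha> + \<beta> *\<^sub>R I0"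
  have img: "(\<lambda>I. so_of_real \<alpha> + \<beta> *\<^sub>R I) ` {I \<in> so_S. c + I \<odot> b = 0} = (+) p ` W"
  proof
    show "(\<lambda>I. so_of_real \<alpha> + \<beta> *\<^sub>R I) ` {I \<in> so_S. c + I \<odot> b = 0} \<subseteq> (+) p ` W"
    proof
      fix z assume "z \<in> (\<lambda>I. so_of_real \<alpha> + \<beta> *\<^sub>R I) ` {I \<in> so_S. c + I \<odot> b = 0}"
      then obtain I where I: "I \<in> {I \<in> so_S. c + I \<odot> b = 0}" and zI: "z = so_of_real \<alpha> + \<beta> *\<^sub>R I"
        by (rule imageE)
      from I have "I \<in> (\<lambda>K. I0 + K) ` W" by (simp only: Z)
      then obtain K where K: "K \<in> W" and IK: "I = I0 + K" by (rule imageE)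
      have z: "z = so_of_real \<alpha> + \<beta> *\<^sub>R (I0 + K)" using zI IK by simp
      have "\<beta> *\<^sub>R K \<in> W" using subW K by (simp add: subspace_scale)
      moreover have "z = p + \<beta> *\<^sub>R K" using z unfolding p_def by (simp add: scaleR_add_right)
      ultimately show "z \<in> (+) p ` W" by (rule rev_image_eqI)
    qed
  next
    show "(+) p ` W \<subseteq> (\<lambda>I. so_of_real \<alpha> + \<beta> *\<^sub>R I) ` {I \<in> so_S. c + I \<odot> b = 0}"
    proof
      fix z assume "z \<in> (+) p ` W"
      then obtain K where K: "K \<in> W" and z: "z = p + K" by blast
      have "(1/\<beta>) *\<^sub>R K \<in> W" using subW K by (simp add: subspace_scale)
      then have "I0 + (1/\<beta>) *\<^sub>R K \<in> (\<lambda>K. I0 + K) ` W" by (rule imageI)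
      then have "I0 + (1/\<beta>) *\<^sub>R K \<in> {I \<in> so_S. c + I \<odot> b = 0}" by (simp only: Z)
      moreover have "z = so_of_real \<alpha> + \<beta> *\<^sub>R (I0 + (1/\<beta>) *\<^sub>R K)"
        using z bt unfolding p_def by (simp add: scaleR_add_right)
      ultimately show "z \<in> (\<lambda>I. so_of_real \<alpha> + \<beta> *\<^sub>R I) ` {I \<in> so_S. c + I \<odot> b = 0}" by (rule rev_image_eqI)
    qed
  qed
  show ?thesis
    unfolding affine_2plane_def img
    using subW dW by (simp add: affine_translation[symmetric] subspace_imp_affine aff_dim_translation_eq aff_dim_subspace)
qed

lemma sphere_eq:
  assumes J: "J \<in> so_S"
  shows "so_sphere (so_of_real \<alpha> + \<beta> *\<^sub>R J) = (\<lambda>I. so_of_real \<alpha> + \<beta> *\<^sub>R I) ` so_S"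
proof
  show "so_sphere (so_of_real \<alpha> + \<beta> *\<^sub>R J) \<subseteq> (\<lambda>I. so_of_real \<alpha> + \<beta> *\<^sub>R I) ` so_S"
  proof
    fix y assume "y \<in> so_sphere (so_of_real \<alpha> + \<beta> *\<^sub>R J)"
    then obtain a' b' J' I where J': "J' \<in> so_S" and I: "I \<in> so_S"
      and e: "so_of_real \<alpha> + \<beta> *\<^sub>R J = so_of_real a' + b' *\<^sub>R J'"
      and y: "y = so_of_real a' + b' *\<^sub>R I"
      unfolding so_sphere_def by blast
    from rep_unique[OF J J' e] have a: "a' = \<alpha>" and bb: "b' = \<beta> \<or> b' = - \<beta>" by auto
    show "y \<in> (\<lambda>I. so_of_real \<alpha> + \<beta> *\<^sub>R I) ` so_S"
    proof (cases "b' = \<beta>")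
      case True
      then show ?thesis using y a I by blast
    next
      case False
      then have "b' = - \<beta>" using bb by auto
      then have "y = so_of_real \<alpha> + \<beta> *\<^sub>R (- I)" using y a by simp
      moreover have "- I \<in> so_S" using I by (rule S_neg)
      ultimately show ?thesis by (rule rev_image_eqI[rotated])
    qed
  qed
next
  show "(\<lambda>I. so_of_real \<alpha> + \<beta> *\<^sub>R I) ` so_S \<subseteq> so_sphere (so_of_real \<alpha> + \<beta> *\<^sub>R J)"
    unfolding so_sphere_def using J by blast
qed

lemma zeros_slice:
  assumes st: "is_stem D G" and z: "Complex \<alpha> \<beta> \<in> D" and J: "J \<in> so_S"
  shows "zeros (slice D G) \<inter> so_sphere (so_of_real \<alpha> + \<beta> *\<^sub>R J) =
    (\<lambda>I. so_of_real \<alpha> + \<beta> *\<^sub>R I) ` {I \<in> so_S. fst (G (Complex \<alpha> \<beta>)) + I \<odot> snd (G (Complex \<alpha> \<beta>)) = 0}"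
  unfolding sphere_eq[OF J] zeros_def
  using slice_eval[OF st z] by auto

lemma of_real_plus_S_zero:
  assumes I: "I \<in> so_S"
  shows "so_of_real r + I \<odot> so_of_real s = 0 \<longleftrightarrow> r = 0 \<and> s = 0"
proof
  assume h: "so_of_real r + I \<odot> so_of_real s = 0"
  then have "R1 (so_of_real r + I \<odot> so_of_real s) = 0" by simp
  then have r: "r = 0" using I by (simp add: so_S_iff)
  then have "s *\<^sub>R I = 0" using h by simp
  then show "r = 0 \<and> s = 0" using r S_ne0[OF I] by simp
qed simp

lemma Z_NZ:
  assumes "I \<in> so_S" "c + I \<odot> b = 0"
  shows "NQ c = NQ b \<and> BQ c b = 0"
proof -
  have c: "c = - (I \<odot> b)" using assms(2) by (simp add: eq_neg_iff_add_eq_0 add.commute)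
  have "NQ c = NQ b" using assms(1) by (simp add: c NQ_mult so_S_iff)
  moreover have "BQ c b = R1 (c \<odot> so_cnj b)" by (simp add: R1_mult_cnj)
  moreover have "R1 (c \<odot> so_cnj b) = 0" using assms(1) by (simp add: c right_inv so_S_iff)
  ultimately show ?thesis by simp
qed

lemma Z_inv:
  fixes b c :: so
  assumes Nb: "NQ b \<noteq> 0"
  defines "I0 \<equiv> - (1 / NQ b) *\<^sub>R (c \<odot> so_cnj b)"
  shows "{I \<in> so_S. c + I \<odot> b = 0} = (if NQ c = NQ b \<and> BQ c b = 0 then {I0} else {})"
proof -
  have uniq: "I = I0" if "I \<in> so_S" "c + I \<odot> b = 0" for I
  proof -
    have "(I \<odot> b) \<odot> so_cnj b = NQ b *\<^sub>R I" by (rule right_inv)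
    moreover have "I \<odot> b = - c" using that(2) by (simp add: eq_neg_iff_add_eq_0 add.commute)
    ultimately have "NQ b *\<^sub>R I = - (c \<odot> so_cnj b)" by simp
    then have "(1 / NQ b) *\<^sub>R (NQ b *\<^sub>R I) = (1 / NQ b) *\<^sub>R (- (c \<odot> so_cnj b))" by simp
    then show ?thesis using Nb unfolding I0_def by simp
  qed
  have sol: "I0 \<in> so_S \<and> c + I0 \<odot> b = 0" if "NQ c = NQ b" "BQ c b = 0"
  proof -
    have "R1 I0 = 0" unfolding I0_def using that by (simp add: R1_mult_cnj)
    moreover have "NQ I0 = 1" unfolding I0_def using that Nb by (simp add: NQ_mult)
    moreover have "c + I0 \<odot> b = 0" unfolding I0_def using Nb by (simp add: right_inv2)
    ultimately show ?thesis by (simp add: so_S_iff)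
  qed
  show ?thesis
  proof (cases "NQ c = NQ b \<and> BQ c b = 0")
    case True
    have "{I \<in> so_S. c + I \<odot> b = 0} = {I0}"
    proof (rule set_eqI)
      fix I show "I \<in> {I \<in> so_S. c + I \<odot> b = 0} \<longleftrightarrow> I \<in> {I0}"
        using uniq[of I] sol True by blast
    qed
    then show ?thesis by (simp only: if_P[OF True])
  next
    case False
    have "{I \<in> so_S. c + I \<odot> b = 0} = {}" using Z_NZ False by blast
    then show ?thesis by (simp only: if_not_P[OF False])
  qed
qed

lemma Z_zero: "{I \<in> so_S. c + I \<odot> 0 = 0} = (if c = 0 then so_S else {})"
  by auto

lemma central_inv_real:
  assumes "r \<noteq> 0"
  shows "so_central_invertible (so_of_real r)"
proof -
  have "\<forall>a b. so_assoc (so_of_real r) a b = 0 \<and> so_of_real r \<odot> a = a \<odot> so_of_real r"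
    unfolding so_assoc_def by (intro allI) simp
  then have "so_of_real r \<in> so_center"
    unfolding so_center_def by blast
  moreover have "so_of_real r \<odot> so_of_real (1/r) = so_one \<and> so_of_real (1/r) \<odot> so_of_real r = so_one"
    using assms by (simp add: so_one_eq so_of_real_scale[symmetric])
  ultimately show ?thesis unfolding so_central_invertible_def by blast
qed

lemma x_facts:
  assumes st: "is_stem D F" and z: "Complex \<alpha> \<beta> \<in> D" and J: "J \<in> so_S"
  defines "x \<equiv> so_of_real \<alpha> + \<beta> *\<^sub>R J"
    and "a \<equiv> fst (F (Complex \<alpha> \<beta>))" and "b \<equiv> snd (F (Complex \<alpha> \<beta>))"
  shows "so_re x = so_of_real \<alpha>"
    and "sph_value (slice D F) x = a"
    and "sph_deriv (slice D F) x = (if \<beta> = 0 then 0 else (1/\<beta>) *\<^sub>R b)"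
proof -
  have R1x: "R1 x = \<alpha>" unfolding x_def using J by (simp add: so_S_iff)
  show re: "so_re x = so_of_real \<alpha>"
    unfolding so_re_def so_t_eq R1x by (simp add: so_of_real_scale[symmetric])
  have cx: "so_cnj x = so_of_real \<alpha> + \<beta> *\<^sub>R (- J)"
    unfolding x_def using J by (simp add: S_cnj)
  have fx: "slice D F x = a + J \<odot> b"
    unfolding x_def a_def b_def by (rule slice_eval[OF st z J])
  have fcx: "slice D F (so_cnj x) = a - J \<odot> b"
    unfolding cx a_def b_def using slice_eval[OF st z S_neg[OF J]] by simp
  show "sph_value (slice D F) x = a"
    unfolding sph_value_def fx fcx by (simp add: scaleR_2[symmetric] del: scaleR_2)
  have im: "so_im x = \<beta> *\<^sub>R J"
    unfolding so_im_def re by (simp add: x_def)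
  show "sph_deriv (slice D F) x = (if \<beta> = 0 then 0 else (1/\<beta>) *\<^sub>R b)"
  proof (cases "\<beta> = 0")
    case True
    then show ?thesis unfolding sph_deriv_def im by simp
  next
    case False
    have "so_im x \<noteq> 0" using False S_ne0[OF J] im by simp
    moreover have NQ: "NQ (\<beta> *\<^sub>R J) = \<beta> * \<beta>" using J by (simp add: so_S_iff)
    have inv: "so_inverse (so_im x) = - (1/\<beta>) *\<^sub>R J"
      unfolding im using so_inverse_eq[of "\<beta> *\<^sub>R J"] NQ False J by (simp add: S_cnj)
    have diff: "slice D F x - slice D F (so_cnj x) = 2 *\<^sub>R (J \<odot> b)"
      unfolding fx fcx by (simp add: scaleR_2)
    show ?thesis unfolding sph_deriv_def using False \<open>so_im x \<noteq> 0\<close>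
      by (simp add: inv diff S_sq[OF J])
  qed
qed

theorem proposition4p9:
  fixes D :: "complex set" and F :: "complex \<Rightarrow> soC" and x :: so
  assumes "D \<noteq> {}"
    and "\<forall>z\<in>D. cnj z \<in> D"
    and "is_stem D F"
    and "x \<in> Omega D"
  defines "f \<equiv> slice D F" and "fc \<equiv> slice_cnj D F" and "Nf \<equiv> slice_N D F"
  shows "(zeros f \<inter> so_sphere x = {}
          \<or> (\<exists>y. zeros f \<inter> so_sphere x = {y} \<and> sph_deriv f x \<in> so_C_star
                \<and> y = so_re x - sph_value f x \<odot> so_inverse (sph_deriv f x))
          \<or> (affine_2plane (zeros f \<inter> so_sphere x) \<and> so_zero_divisor (sph_deriv f x))
          \<or> (so_sphere x \<subseteq> zeros f \<and> sph_deriv f x = 0))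
       \<and> (zeros f \<inter> so_sphere x = {} \<longrightarrow>
            (zeros Nf \<inter> so_sphere x = {} \<and> zeros fc \<inter> so_sphere x = {})
          \<or> (so_sphere x \<subseteq> zeros Nf \<and>
              (zeros fc \<inter> so_sphere x = {} \<or> aff_dim (zeros fc \<inter> so_sphere x) = 2)))
       \<and> (\<forall>y. zeros f \<inter> so_sphere x = {y} \<and> sph_deriv f x \<in> so_C_star
              \<and> y = so_re x - sph_value f x \<odot> so_inverse (sph_deriv f x) \<longrightarrow>
            so_sphere x \<subseteq> zeros Nf \<and>
            zeros fc \<inter> so_sphere x =
              {so_inverse (sph_deriv f x) \<odot> (so_cnj y \<odot> sph_deriv f x)})
       \<and> (affine_2plane (zeros f \<inter> so_sphere x) \<and> so_zero_divisor (sph_deriv f x) \<longrightarrow>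
            so_sphere x \<subseteq> zeros Nf \<and>
            (zeros fc \<inter> so_sphere x = {} \<or> aff_dim (zeros fc \<inter> so_sphere x) = 2))
       \<and> (so_sphere x \<subseteq> zeros f \<and> sph_deriv f x = 0 \<longrightarrow>
            so_sphere x \<subseteq> zeros fc \<and> so_sphere x \<subseteq> zeros Nf)"
proof -
  from assms(4) obtain \<alpha> \<beta> J where z: "Complex \<alpha> \<beta> \<in> D" and J: "J \<in> so_S"
    and x: "x = so_of_real \<alpha> + \<beta> *\<^sub>R J"
    unfolding Omega_def by blast
  have st: "is_stem D F" by (rule assms(3))
  define a where "a = fst (F (Complex \<alpha> \<beta>))"
  define b where "b = snd (F (Complex \<alpha> \<beta>))"
  define P where "P = (\<lambda>I. so_of_real \<alpha> + \<beta> *\<^sub>R I)"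
  define Zf where "Zf = {I \<in> so_S. a + I \<odot> b = 0}"
  define Zc where "Zc = {I \<in> so_S. so_cnj a + I \<odot> so_cnj b = 0}"
  define NZ where "NZ \<longleftrightarrow> NQ a = NQ b \<and> BQ a b = 0"
  define d where "d = sph_deriv f x"
  have Sx: "so_sphere x = P ` so_S"
    unfolding x P_def by (rule sphere_eq[OF J])
  have Vf: "zeros f \<inter> so_sphere x = P ` Zf"
    unfolding f_def x P_def Zf_def a_def b_def by (rule zeros_slice[OF st z J])
  have Vc: "zeros fc \<inter> so_sphere x = P ` Zc"
    unfolding fc_def slice_cnj_def x P_def Zc_def a_def b_def
    using zeros_slice[OF stem_cnj[OF st] z J] by (simp add: soC_cnj_eq)
  have VN0: "zeros Nf \<inter> so_sphere x = P ` {I \<in> so_S. so_of_real (NQ a - NQ b) + I \<odot> so_of_real (2 * BQ a b) = 0}"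
    unfolding Nf_def slice_N_def x P_def
    using zeros_slice[OF stem_N[OF st] z J]
    by (simp add: soC_cnj_eq soC_mult_eq a_def[symmetric] b_def[symmetric] mult_cnj_self so_of_real_diff sum_cnj)
  have "{I \<in> so_S. so_of_real (NQ a - NQ b) + I \<odot> so_of_real (2 * BQ a b) = 0} = (if NZ then so_S else {})"
    using of_real_plus_S_zero unfolding NZ_def by auto
  then have VN: "zeros Nf \<inter> so_sphere x = (if NZ then so_sphere x else {})"
    using VN0 Sx by simp
  have SN: "NZ \<Longrightarrow> so_sphere x \<subseteq> zeros Nf" using VN by auto
  have NZf: "Zf \<noteq> {} \<Longrightarrow> NZ" using Z_NZ unfolding Zf_def NZ_def by blast
  have NZc: "Zc \<noteq> {} \<Longrightarrow> NZ" using Z_NZ[of _ "so_cnj a" "so_cnj b"] unfolding Zc_def NZ_def by auto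
  have re: "so_re x = so_of_real \<alpha>"
    unfolding x by (rule x_facts(1)[OF st z J])
  have val: "sph_value f x = a"
    unfolding x f_def a_def by (rule x_facts(2)[OF st z J])
  have der: "d = (if \<beta> = 0 then 0 else (1/\<beta>) *\<^sub>R b)"
    unfolding d_def x f_def b_def by (rule x_facts(3)[OF st z J])
  have b0: "\<beta> = 0 \<Longrightarrow> b = 0"
    unfolding b_def using stem_real[OF st] z by blast
  have SxE: "so_sphere x \<noteq> {}" unfolding Sx using S_nonempty by blast
  have Zb0: "b = 0 \<Longrightarrow> Zf = (if a = 0 then so_S else {})" unfolding Zf_def by auto
  have Zcb0: "b = 0 \<Longrightarrow> Zc = (if a = 0 then so_S else {})" unfolding Zc_def
    by (auto simp: cnj_zero) (metis cnj_cnj cnj_zero)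
  have Zc2: "affine_2plane (P ` Zc)" if H: "Zc \<noteq> {}" "b \<noteq> 0" "NQ b = 0" "\<beta> \<noteq> 0"
  proof -
    obtain I0 where "I0 \<in> Zc" using H(1) by blast
    then have I0: "I0 \<in> so_S" "so_cnj a + I0 \<odot> so_cnj b = 0" unfolding Zc_def by auto
    have "so_cnj b \<noteq> 0" using H(2) by (metis cnj_cnj cnj_zero)
    then show ?thesis unfolding P_def Zc_def
      using ZD[of "so_cnj b" I0 "so_cnj a" \<beta> \<alpha>] I0 H by simp
  qed
  have Zf2: "affine_2plane (P ` Zf)" if H: "Zf \<noteq> {}" "b \<noteq> 0" "NQ b = 0" "\<beta> \<noteq> 0"
  proof -
    obtain I0 where "I0 \<in> Zf" using H(1) by blast
    then have I0: "I0 \<in> so_S" "a + I0 \<odot> b = 0" unfolding Zf_def by auto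
    then show ?thesis unfolding P_def Zf_def
      using ZD[of b I0 a \<beta> \<alpha>] I0 H by simp
  qed
  have dd: "\<beta> \<noteq> 0 \<Longrightarrow> d = (1/\<beta>) *\<^sub>R b" using der by simp
  have NQd: "\<beta> \<noteq> 0 \<Longrightarrow> NQ d = NQ b / (\<beta> * \<beta>)" using dd by simp
  have inv_d: "\<beta> \<noteq> 0 \<Longrightarrow> NQ b \<noteq> 0 \<Longrightarrow> so_inverse d = (\<beta> / NQ b) *\<^sub>R so_cnj b"
  proof -
    assume bt: "\<beta> \<noteq> 0" and Nb: "NQ b \<noteq> 0"
    have "NQ d \<noteq> 0" using NQd[OF bt] Nb bt by simp
    then have "so_inverse d = (1 / NQ d) *\<^sub>R so_cnj d" by (rule so_inverse_eq)
    also have "\<dots> = ((1 / NQ d) * (1/\<beta>)) *\<^sub>R so_cnj b" using dd[OF bt] by simp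
    also have "(1 / NQ d) * (1/\<beta>) = \<beta> / NQ b" unfolding NQd[OF bt] using bt Nb by (simp add: field_simps)
    finally show ?thesis .
  qed
  define I0 where "I0 = - (1 / NQ b) *\<^sub>R (a \<odot> so_cnj b)"
  define K where "K = - (1 / NQ b) *\<^sub>R (so_cnj a \<odot> b)"
  have Zf1: "NQ b \<noteq> 0 \<Longrightarrow> NZ \<Longrightarrow> Zf = {I0}"
    unfolding Zf_def I0_def NZ_def using Z_inv[of b a] by simp
  have Zc1: "NQ b \<noteq> 0 \<Longrightarrow> NZ \<Longrightarrow> Zc = {K}"
    unfolding Zc_def K_def NZ_def using Z_inv[of "so_cnj b" "so_cnj a"] by simp
  have CS: "d \<in> so_C_star" if "\<beta> \<noteq> 0" "NQ b \<noteq> 0" "b \<noteq> 0"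
  proof -
    have "NQ d \<noteq> 0" using NQd[OF that(1)] that by simp
    moreover have "d \<noteq> 0" using dd[OF that(1)] that by simp
    ultimately show ?thesis unfolding so_C_star_def so_C_def
      by (simp add: so_n_eq central_inv_real)
  qed
  have c1: "zeros f \<inter> so_sphere x = {}
          \<or> (\<exists>y. zeros f \<inter> so_sphere x = {y} \<and> d \<in> so_C_star
                \<and> y = so_of_real \<alpha> - a \<odot> so_inverse d)
          \<or> (affine_2plane (zeros f \<inter> so_sphere x) \<and> so_zero_divisor d)
          \<or> (so_sphere x \<subseteq> zeros f \<and> d = 0)"
  proof (cases "b = 0")
    case True
    show ?thesis
    proof (cases "a = 0")
      case True
      then have "zeros f \<inter> so_sphere x = so_sphere x" using Zb0 \<open>b = 0\<close> Vf Sx by simp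
      moreover have "d = 0" using der \<open>b = 0\<close> by simp
      ultimately show ?thesis by blast
    next
      case False
      then show ?thesis using Zb0 \<open>b = 0\<close> Vf by simp
    qed
  next
    case False
    then have bt: "\<beta> \<noteq> 0" using b0 by blast
    show ?thesis
    proof (cases "NQ b = 0")
      case True
      show ?thesis
      proof (cases "Zf = {}")
        case True
        then show ?thesis using Vf by simp
      next
        case False
        have "affine_2plane (zeros f \<inter> so_sphere x)"
          using Zf2[OF False \<open>b \<noteq> 0\<close> \<open>NQ b = 0\<close> bt] Vf by simp
        moreover have "so_zero_divisor d"
          unfolding so_zero_divisor_def using dd[OF bt] bt \<open>b \<noteq> 0\<close> \<open>NQ b = 0\<close> by (simp add: so_n_eq)
        ultimately show ?thesis by blast
      qed
    next
      case Nb: False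
      show ?thesis
      proof (cases NZ)
        case True
        have "zeros f \<inter> so_sphere x = {P I0}" using Zf1[OF Nb True] Vf by simp
        moreover have "P I0 = so_of_real \<alpha> - a \<odot> so_inverse d"
          unfolding P_def I0_def inv_d[OF bt Nb] by (simp add: algebra_simps)
        ultimately show ?thesis using CS[OF bt Nb \<open>b \<noteq> 0\<close>] by blast
      next
        case False
        then show ?thesis using NZf Vf by auto
      qed
    qed
  qed
  have fcase: "zeros fc \<inter> so_sphere x = {} \<or> aff_dim (zeros fc \<inter> so_sphere x) = 2"
    if H: "b \<noteq> 0" "NQ b = 0"
  proof (cases "Zc = {}")
    case True
    then show ?thesis using Vc by simp
  next
    case False
    have "\<beta> \<noteq> 0" using b0 H by blast
    then have "affine_2plane (P ` Zc)" using Zc2[OF False H] by blast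
    then show ?thesis using Vc unfolding affine_2plane_def by simp
  qed
  have c2: "zeros f \<inter> so_sphere x = {} \<longrightarrow>
            (zeros Nf \<inter> so_sphere x = {} \<and> zeros fc \<inter> so_sphere x = {})
          \<or> (so_sphere x \<subseteq> zeros Nf \<and>
              (zeros fc \<inter> so_sphere x = {} \<or> aff_dim (zeros fc \<inter> so_sphere x) = 2))"
  proof
    assume "zeros f \<inter> so_sphere x = {}"
    then have Zf0: "Zf = {}" using Vf by simp
    show "(zeros Nf \<inter> so_sphere x = {} \<and> zeros fc \<inter> so_sphere x = {})
          \<or> (so_sphere x \<subseteq> zeros Nf \<and>
              (zeros fc \<inter> so_sphere x = {} \<or> aff_dim (zeros fc \<inter> so_sphere x) = 2))"
    proof (cases NZ)
      case False
      then have "Zc = {}" using NZc by blast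
      then show ?thesis using False VN Vc by simp
    next
      case True
      have "zeros fc \<inter> so_sphere x = {} \<or> aff_dim (zeros fc \<inter> so_sphere x) = 2"
      proof (cases "b = 0")
        case True
        then have "a \<noteq> 0" using Zf0 Zb0 S_nonempty by auto
        then have "Zc = {}" using Zcb0 True by simp
        then show ?thesis using Vc by simp
      next
        case False
        show ?thesis
        proof (cases "NQ b = 0")
          case True
          then show ?thesis using fcase False by blast
        next
          case Nb: False
          then have "Zf = {I0}" using Zf1 \<open>NZ\<close> by blast
          then show ?thesis using Zf0 by simp
        qed
      qed
      then show ?thesis using SN[OF True] by blast
    qed
  qed
  have c4: "affine_2plane (zeros f \<inter> so_sphere x) \<and> so_zero_divisor d \<longrightarrow>
            so_sphere x \<subseteq> zeros Nf \<and>
            (zeros fc \<inter> so_sphere x = {} \<or> aff_dim (zeros fc \<inter> so_sphere x) = 2)"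
  proof
    assume H: "affine_2plane (zeros f \<inter> so_sphere x) \<and> so_zero_divisor d"
    then have d0: "d \<noteq> 0" "NQ d = 0" unfolding so_zero_divisor_def by (auto simp: so_n_eq)
    then have bt: "\<beta> \<noteq> 0" using der by auto
    have bn: "b \<noteq> 0" using d0 dd[OF bt] by auto
    have Nb: "NQ b = 0" using d0 NQd[OF bt] bt by simp
    have "zeros f \<inter> so_sphere x \<noteq> {}"
      using H unfolding affine_2plane_def by auto
    then have "Zf \<noteq> {}" using Vf by auto
    then have "NZ" by (rule NZf)
    then show "so_sphere x \<subseteq> zeros Nf \<and>
            (zeros fc \<inter> so_sphere x = {} \<or> aff_dim (zeros fc \<inter> so_sphere x) = 2)"
      using SN fcase[OF bn Nb] by blast
  qed
  have c5: "so_sphere x \<subseteq> zeros f \<and> d = 0 \<longrightarrow>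
            so_sphere x \<subseteq> zeros fc \<and> so_sphere x \<subseteq> zeros Nf"
  proof
    assume H: "so_sphere x \<subseteq> zeros f \<and> d = 0"
    have bz: "b = 0" using H der b0 by (cases "\<beta> = 0") auto
    have "zeros f \<inter> so_sphere x \<noteq> {}" using H SxE by blast
    then have "Zf \<noteq> {}" using Vf by auto
    then have az: "a = 0" using Zb0[OF bz] by (cases "a = 0") auto
    have "Zc = so_S" using Zcb0[OF bz] az by simp
    then have "zeros fc \<inter> so_sphere x = so_sphere x" using Vc Sx by simp
    moreover have NZ unfolding NZ_def using az bz by simp
    ultimately show "so_sphere x \<subseteq> zeros fc \<and> so_sphere x \<subseteq> zeros Nf"
      using SN by blast
  qed
  have c3: "\<forall>y. zeros f \<inter> so_sphere x = {y} \<and> d \<in> so_C_star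
              \<and> y = so_of_real \<alpha> - a \<odot> so_inverse d \<longrightarrow>
            so_sphere x \<subseteq> zeros Nf \<and>
            zeros fc \<inter> so_sphere x = {so_inverse d \<odot> (so_cnj y \<odot> d)}"
  proof (intro allI impI)
    fix y assume H: "zeros f \<inter> so_sphere x = {y} \<and> d \<in> so_C_star
              \<and> y = so_of_real \<alpha> - a \<odot> so_inverse d"
    have dn: "d \<noteq> 0" using H unfolding so_C_star_def by simp
    have ci: "so_central_invertible (so_n d)" using H unfolding so_C_star_def so_C_def by auto
    have Nd: "NQ d \<noteq> 0"
    proof
      assume "NQ d = 0"
      then have "so_n d = 0" by (simp add: so_n_eq)
      then show False using ci unfolding so_central_invertible_def by (simp add: so_one_eq)
    qed
    have bt: "\<beta> \<noteq> 0" using dn der by auto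
    have Nb: "NQ b \<noteq> 0" using Nd NQd[OF bt] by auto
    have "Zf \<noteq> {}" using H Vf by auto
    then have nz: NZ by (rule NZf)
    have Zf': "Zf = {I0}" by (rule Zf1[OF Nb nz])
    have Zc': "Zc = {K}" by (rule Zc1[OF Nb nz])
    have y: "y = P I0" using H Vf Zf' by simp
    have I0S: "I0 \<in> so_S" and I0b: "I0 \<odot> b = - a"
      using Zf' unfolding Zf_def by (auto simp: eq_neg_iff_add_eq_0 add.commute)
    have KS: "K \<in> so_S" using Zc' unfolding Zc_def by auto
    have "so_cnj K = - (1 / NQ b) *\<^sub>R (so_cnj b \<odot> a)"
      unfolding K_def by (simp add: cnj_mult)
    then have Keq: "K = (1 / NQ b) *\<^sub>R (so_cnj b \<odot> a)"
      using S_cnj[OF KS] by (metis minus_minus scaleR_minus_left)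
    have cy: "so_cnj y = so_of_real \<alpha> - \<beta> *\<^sub>R I0"
      unfolding y P_def using S_cnj[OF I0S] by simp
    have "so_cnj y \<odot> d = (1/\<beta>) *\<^sub>R (\<alpha> *\<^sub>R b + \<beta> *\<^sub>R a)"
      unfolding cy dd[OF bt] by (simp add: mult_diff_left I0b scaleR_add_right)
    then have "so_inverse d \<odot> (so_cnj y \<odot> d)
        = (\<beta> / NQ b) *\<^sub>R ((1/\<beta>) *\<^sub>R (so_cnj b \<odot> (\<alpha> *\<^sub>R b + \<beta> *\<^sub>R a)))"
      unfolding inv_d[OF bt Nb] by (simp only: mult_scale_left mult_scale_right scaleR_scaleR mult.commute)
    also have "\<dots> = (1 / NQ b) *\<^sub>R (so_cnj b \<odot> (\<alpha> *\<^sub>R b + \<beta> *\<^sub>R a))"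
      using bt by simp
    also have "\<dots> = (1 / NQ b) *\<^sub>R (so_of_real (\<alpha> * NQ b) + \<beta> *\<^sub>R (so_cnj b \<odot> a))"
      by (simp add: mult_add_right cnj_mult_self so_of_real_scale)
    also have "\<dots> = so_of_real \<alpha> + \<beta> *\<^sub>R K"
      unfolding Keq using Nb
      by (simp add: scaleR_add_right so_of_real_scale[symmetric])
    finally have "so_inverse d \<odot> (so_cnj y \<odot> d) = P K" unfolding P_def by simp
    then show "so_sphere x \<subseteq> zeros Nf \<and>
            zeros fc \<inter> so_sphere x = {so_inverse d \<odot> (so_cnj y \<odot> d)}"
      using SN[OF nz] Vc Zc' by simp
  qed
  show ?thesis
    unfolding d_def[symmetric] re val
    using c1 c2 c3 c4 c5 by blast
qed

end
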